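(* Let $A$ be an idempotent $\Gamma$-graded ring. For every $M\in A\text{-gr}$ the map $\chi_M:M\to A\cdot\mathrm{HOM}_A(A,M)$ defined by $\chi_M(m)(a)=am$ for $a\in A$ is a graded isomorphism in $A\text{-gr}$, and it is natural in $M$.
   Context: $\Gamma$ is a fixed multiplicative group. Rings are associative $\Gamma$-graded, not necessarily unital; $A$ is idempotent if $A^2=A$. A graded left $A$-module $M$ is unital if $AM=M$ and torsion-free if $Am=0$ implies $m=0$; $A\text{-gr}$ is the category of unital torsion-free graded left $A$-modules with degree-preserving $A$-linear maps. A left $A$-linear map $f:M\to N$ is graded of degree $\sigma$ if $f(M_\tau)\subseteq N_{\tau\sigma}$ for all $\tau$; $\mathrm{HOM}_A(M,N)=\bigoplus_\sigma \mathrm{HOM}_A(M,N)_\sigma$ is graded accordingly. $\mathrm{HOM}_A(A,M)$ is a graded left $A$-module via $(af)(x)=f(xa)$, and $A\cdot\mathrm{HOM}_A(A,M)$ is its submodule of finite sums $\sum a_if_i$. Naturality means: for a morphism $f:M\to N$ in $A\text{-gr}$, composing with $f$ maps $A\cdot\mathrm{HOM}_A(A,M)$ into $A\cdot\mathrm{HOM}_A(A,N)$ and $(f\circ -)\circ\chi_M=\chi_N\circ f$. *)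

theory Defs
  imports "HOL-Algebra.Group" "HOL-Library.Function_Algebras"
begin

text \<open>The grading group Gamma is a HOL-Algebra group G (multiplicative, not necessarily
commutative).  The ring A is the whole of a type of class ring (associative,
not necessarily unital); a graded module is a carrier set of a type of class
ab_group_add with a scalar action and a family of homogeneous components.\<close>

definition subgrp_add :: "'m::ab_group_add set \<Rightarrow> bool" where
  "subgrp_add S \<longleftrightarrow> 0 \<in> S \<and> (\<forall>x\<in>S. \<forall>y\<in>S. x + y \<in> S) \<and> (\<forall>x\<in>S. - x \<in> S)"

definition hdecomp :: "('g, 'b) monoid_scheme \<Rightarrow> ('g \<Rightarrow> 'm::ab_group_add set) \<Rightarrow> 'm \<Rightarrow> ('g \<Rightarrow> 'm) \<Rightarrow> bool" where
  "hdecomp G D x c \<longleftrightarrow> (\<forall>\<sigma>. \<sigma> \<notin> carrier G \<longrightarrow> c \<sigma> = 0) \<and> (\<forall>\<sigma>\<in>carrier G. c \<sigma> \<in> D \<sigma>)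
     \<and> finite {\<sigma>. c \<sigma> \<noteq> 0} \<and> x = (\<Sum>\<sigma>\<in>{\<sigma>. c \<sigma> \<noteq> 0}. c \<sigma>)"

definition graded_dsum :: "('g, 'b) monoid_scheme \<Rightarrow> ('g \<Rightarrow> 'm::ab_group_add set) \<Rightarrow> 'm set \<Rightarrow> bool" where
  "graded_dsum G D S \<longleftrightarrow> subgrp_add S \<and> (\<forall>\<sigma>\<in>carrier G. subgrp_add (D \<sigma>) \<and> D \<sigma> \<subseteq> S)
     \<and> (\<forall>x\<in>S. \<exists>!c. hdecomp G D x c)"

definition graded_ring :: "('g, 'b) monoid_scheme \<Rightarrow> ('g \<Rightarrow> 'a::ring set) \<Rightarrow> bool" where
  "graded_ring G Ag \<longleftrightarrow> group G \<and> graded_dsum G Ag UNIV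
     \<and> (\<forall>\<sigma>\<in>carrier G. \<forall>\<tau>\<in>carrier G. \<forall>a\<in>Ag \<sigma>. \<forall>b\<in>Ag \<tau>. a * b \<in> Ag (\<sigma> \<otimes>\<^bsub>G\<^esub> \<tau>))"

text \<open>A is idempotent: A^2 = A, i.e. every element is a finite sum of products.\<close>
definition idempotent_ring :: "'a::ring itself \<Rightarrow> bool" where
  "idempotent_ring _ \<longleftrightarrow> (\<forall>x::'a. \<exists>ps. x = sum_list (map (\<lambda>(a, b). a * b) ps))"

definition gr_module :: "('g, 'b) monoid_scheme \<Rightarrow> ('g \<Rightarrow> 'a::ring set)
    \<Rightarrow> 'm::ab_group_add set \<Rightarrow> ('a \<Rightarrow> 'm \<Rightarrow> 'm) \<Rightarrow> ('g \<Rightarrow> 'm set) \<Rightarrow> bool" where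
  "gr_module G Ag M sm Mg \<longleftrightarrow> subgrp_add M
     \<and> (\<forall>a. \<forall>m\<in>M. sm a m \<in> M)
     \<and> (\<forall>a b. \<forall>m\<in>M. sm (a + b) m = sm a m + sm b m)
     \<and> (\<forall>a. \<forall>m\<in>M. \<forall>n\<in>M. sm a (m + n) = sm a m + sm a n)
     \<and> (\<forall>a b. \<forall>m\<in>M. sm (a * b) m = sm a (sm b m))
     \<and> graded_dsum G Mg M
     \<and> (\<forall>\<sigma>\<in>carrier G. \<forall>\<tau>\<in>carrier G. \<forall>a\<in>Ag \<sigma>. \<forall>m\<in>Mg \<tau>. sm a m \<in> Mg (\<sigma> \<otimes>\<^bsub>G\<^esub> \<tau>))"

text \<open>Unital: AM = M (every element is a finite sum of a_i m_i).\<close>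
definition unital_module :: "'m::ab_group_add set \<Rightarrow> ('a \<Rightarrow> 'm \<Rightarrow> 'm) \<Rightarrow> bool" where
  "unital_module M sm \<longleftrightarrow> (\<forall>m\<in>M. \<exists>ps. (\<forall>(a, n)\<in>set ps. n \<in> M)
       \<and> m = sum_list (map (\<lambda>(a, n). sm a n) ps))"

definition torsion_free :: "'m::ab_group_add set \<Rightarrow> ('a \<Rightarrow> 'm \<Rightarrow> 'm) \<Rightarrow> bool" where
  "torsion_free M sm \<longleftrightarrow> (\<forall>m\<in>M. (\<forall>a. sm a m = 0) \<longrightarrow> m = 0)"

definition in_A_gr :: "('g, 'b) monoid_scheme \<Rightarrow> ('g \<Rightarrow> 'a::ring set)
    \<Rightarrow> 'm::ab_group_add set \<Rightarrow> ('a \<Rightarrow> 'm \<Rightarrow> 'm) \<Rightarrow> ('g \<Rightarrow> 'm set) \<Rightarrow> bool" where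
  "in_A_gr G Ag M sm Mg \<longleftrightarrow> gr_module G Ag M sm Mg \<and> unital_module M sm \<and> torsion_free M sm"

definition gr_hom :: "('g, 'b) monoid_scheme
    \<Rightarrow> 'm::ab_group_add set \<Rightarrow> ('a \<Rightarrow> 'm \<Rightarrow> 'm) \<Rightarrow> ('g \<Rightarrow> 'm set)
    \<Rightarrow> 'n::ab_group_add set \<Rightarrow> ('a \<Rightarrow> 'n \<Rightarrow> 'n) \<Rightarrow> ('g \<Rightarrow> 'n set) \<Rightarrow> ('m \<Rightarrow> 'n) \<Rightarrow> bool" where
  "gr_hom G M sm Mg N sn Ng f \<longleftrightarrow> (\<forall>m\<in>M. f m \<in> N)
     \<and> (\<forall>m\<in>M. \<forall>m'\<in>M. f (m + m') = f m + f m')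
     \<and> (\<forall>a. \<forall>m\<in>M. f (sm a m) = sn a (f m))
     \<and> (\<forall>\<sigma>\<in>carrier G. f ` Mg \<sigma> \<subseteq> Ng \<sigma>)"

definition HOM_deg :: "('g, 'b) monoid_scheme \<Rightarrow> ('g \<Rightarrow> 'a::ring set)
    \<Rightarrow> 'm::ab_group_add set \<Rightarrow> ('a \<Rightarrow> 'm \<Rightarrow> 'm) \<Rightarrow> ('g \<Rightarrow> 'm set) \<Rightarrow> 'g \<Rightarrow> ('a \<Rightarrow> 'm) set" where
  "HOM_deg G Ag M sm Mg \<sigma> = {f. (\<forall>x. f x \<in> M) \<and> (\<forall>x y. f (x + y) = f x + f y)
     \<and> (\<forall>a x. f (a * x) = sm a (f x))
     \<and> (\<forall>\<tau>\<in>carrier G. f ` Ag \<tau> \<subseteq> Mg (\<tau> \<otimes>\<^bsub>G\<^esub> \<sigma>))}"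

definition HOM :: "('g, 'b) monoid_scheme \<Rightarrow> ('g \<Rightarrow> 'a::ring set)
    \<Rightarrow> 'm::ab_group_add set \<Rightarrow> ('a \<Rightarrow> 'm \<Rightarrow> 'm) \<Rightarrow> ('g \<Rightarrow> 'm set) \<Rightarrow> ('a \<Rightarrow> 'm) set" where
  "HOM G Ag M sm Mg = {f. \<exists>c. hdecomp G (HOM_deg G Ag M sm Mg) f c}"

definition hom_act :: "'a::ring \<Rightarrow> ('a \<Rightarrow> 'm) \<Rightarrow> ('a \<Rightarrow> 'm)" where
  "hom_act a f = (\<lambda>x. f (x * a))"

definition AHOM :: "('g, 'b) monoid_scheme \<Rightarrow> ('g \<Rightarrow> 'a::ring set)
    \<Rightarrow> 'm::ab_group_add set \<Rightarrow> ('a \<Rightarrow> 'm \<Rightarrow> 'm) \<Rightarrow> ('g \<Rightarrow> 'm set) \<Rightarrow> ('a \<Rightarrow> 'm) set" where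
  "AHOM G Ag M sm Mg = {sum_list (map (\<lambda>(a, f). hom_act a f) ps) | ps.
       \<forall>(a, f)\<in>set ps. f \<in> HOM G Ag M sm Mg}"

definition AHOM_deg :: "('g, 'b) monoid_scheme \<Rightarrow> ('g \<Rightarrow> 'a::ring set)
    \<Rightarrow> 'm::ab_group_add set \<Rightarrow> ('a \<Rightarrow> 'm \<Rightarrow> 'm) \<Rightarrow> ('g \<Rightarrow> 'm set) \<Rightarrow> 'g \<Rightarrow> ('a \<Rightarrow> 'm) set" where
  "AHOM_deg G Ag M sm Mg \<sigma> = AHOM G Ag M sm Mg \<inter> HOM_deg G Ag M sm Mg \<sigma>"

definition chi :: "('a \<Rightarrow> 'm \<Rightarrow> 'm) \<Rightarrow> 'm \<Rightarrow> ('a \<Rightarrow> 'm)" where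
  "chi sm m = (\<lambda>a. sm a m)"

end

theory Submission
  imports Defs
begin

lemma sum_fun_apply: "(sum f F) x = sum (\<lambda>i. f i x) F"
  by (induction F rule: infinite_finite_induct) auto

lemma subgrp_0: "subgrp_add S \<Longrightarrow> 0 \<in> S" by (simp add: subgrp_add_def)
lemma subgrp_plus: "subgrp_add S \<Longrightarrow> x \<in> S \<Longrightarrow> y \<in> S \<Longrightarrow> x + y \<in> S" by (simp add: subgrp_add_def)
lemma subgrp_neg: "subgrp_add S \<Longrightarrow> x \<in> S \<Longrightarrow> - x \<in> S" by (simp add: subgrp_add_def)
lemma subgrp_diff: "subgrp_add S \<Longrightarrow> x \<in> S \<Longrightarrow> y \<in> S \<Longrightarrow> x - y \<in> S"
  by (metis diff_conv_add_uminus subgrp_neg subgrp_plus)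
lemma subgrp_sum: "subgrp_add S \<Longrightarrow> (\<And>i. i \<in> F \<Longrightarrow> x i \<in> S) \<Longrightarrow> sum x F \<in> S"
  by (induction F rule: infinite_finite_induct) (auto simp: subgrp_0 subgrp_plus)

lemma hdecomp_supp_carrier: "hdecomp G D x c \<Longrightarrow> {\<sigma>. c \<sigma> \<noteq> 0} \<subseteq> carrier G"
  unfolding hdecomp_def by blast

lemma hdecomp_sum:
  assumes "hdecomp G D x c" "finite F" "{\<sigma>. c \<sigma> \<noteq> 0} \<subseteq> F"
  shows "x = sum c F"
proof -
  have "x = sum c {\<sigma>. c \<sigma> \<noteq> 0}" using assms(1) unfolding hdecomp_def by blast
  also have "\<dots> = sum c F"
    by (rule sum.mono_neutral_left) (use assms in auto)
  finally show ?thesis .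
qed

lemma gd_exists: "graded_dsum G D S \<Longrightarrow> x \<in> S \<Longrightarrow> \<exists>c. hdecomp G D x c"
  unfolding graded_dsum_def by blast

lemma gd_unique: "graded_dsum G D S \<Longrightarrow> x \<in> S \<Longrightarrow> hdecomp G D x c \<Longrightarrow> hdecomp G D x d \<Longrightarrow> c = d"
  unfolding graded_dsum_def by blast

lemma gd_indep:
  assumes gd: "graded_dsum G D S" and F: "finite F" "F \<subseteq> carrier G"
    and d: "\<And>\<rho>. \<rho> \<in> F \<Longrightarrow> d \<rho> \<in> D \<rho>" and s: "sum d F = 0"
  shows "\<forall>\<rho>\<in>F. d \<rho> = 0"
proof -
  define c where "c = (\<lambda>\<rho>. if \<rho> \<in> F then d \<rho> else 0)"
  have sub: "\<And>\<sigma>. \<sigma> \<in> carrier G \<Longrightarrow> subgrp_add (D \<sigma>)" using gd unfolding graded_dsum_def by blast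
  have S0: "0 \<in> S" using gd unfolding graded_dsum_def by (simp add: subgrp_0)
  have suppc: "{\<sigma>. c \<sigma> \<noteq> 0} \<subseteq> F" unfolding c_def by auto
  have "sum c {\<sigma>. c \<sigma> \<noteq> 0} = sum c F"
    by (rule sum.mono_neutral_left) (use F suppc in auto)
  also have "\<dots> = sum d F" unfolding c_def by simp
  finally have sc: "sum c {\<sigma>. c \<sigma> \<noteq> 0} = 0" using s by simp
  have h1: "hdecomp G D 0 c"
    unfolding hdecomp_def using F d sub subgrp_0 suppc sc
    by (auto simp: c_def intro: finite_subset)
  have h2: "hdecomp G D 0 (\<lambda>_. 0)"
    unfolding hdecomp_def using sub subgrp_0 by auto
  have "c = (\<lambda>_. 0)" using gd_unique[OF gd S0 h1 h2] .
  then show ?thesis unfolding c_def by (metis (mono_tags))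
qed

lemma gd_indep_inj:
  assumes gd: "graded_dsum G D S" and F: "finite F" and inj: "inj_on g F" and gF: "g ` F \<subseteq> carrier G"
    and d: "\<And>\<rho>. \<rho> \<in> F \<Longrightarrow> d \<rho> \<in> D (g \<rho>)" and s: "sum d F = 0"
  shows "\<forall>\<rho>\<in>F. d \<rho> = 0"
proof -
  define d' where "d' = (\<lambda>x. d (the_inv_into F g x))"
  have "sum d' (g ` F) = sum (d' \<circ> g) F" by (rule sum.reindex[OF inj])
  also have "\<dots> = sum d F" unfolding d'_def by (rule sum.cong) (auto simp: the_inv_into_f_f[OF inj])
  finally have s': "sum d' (g ` F) = 0" using s by simp
  have "\<forall>x\<in>g ` F. d' x = 0"
    by (rule gd_indep[OF gd _ gF _ s']) (use F in \<open>auto simp: d'_def the_inv_into_f_f[OF inj] d\<close>)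
  then show ?thesis unfolding d'_def by (auto simp: the_inv_into_f_f[OF inj])
qed


locale grm =
  fixes G :: "('g, 'b) monoid_scheme" and Ag :: "'g \<Rightarrow> 'a::ring set"
    and M :: "'m::ab_group_add set" and sm :: "'a \<Rightarrow> 'm \<Rightarrow> 'm" and Mg :: "'g \<Rightarrow> 'm set"
  assumes GR: "graded_ring G Ag" and ID: "idempotent_ring TYPE('a)" and MOD: "in_A_gr G Ag M sm Mg"
begin

lemma grp: "group G" using GR unfolding graded_ring_def by blast
lemma AgD: "graded_dsum G Ag UNIV" using GR unfolding graded_ring_def by blast
lemma MgD: "graded_dsum G Mg M" using MOD unfolding in_A_gr_def gr_module_def by blast
lemma Msub: "subgrp_add M" using MOD unfolding in_A_gr_def gr_module_def by blast
lemma sm_closed: "m \<in> M \<Longrightarrow> sm a m \<in> M" using MOD unfolding in_A_gr_def gr_module_def by blast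
lemma sm_addl: "m \<in> M \<Longrightarrow> sm (a + b) m = sm a m + sm b m" using MOD unfolding in_A_gr_def gr_module_def by blast
lemma sm_addr: "m \<in> M \<Longrightarrow> n \<in> M \<Longrightarrow> sm a (m + n) = sm a m + sm a n" using MOD unfolding in_A_gr_def gr_module_def by blast
lemma sm_mult: "m \<in> M \<Longrightarrow> sm (a * b) m = sm a (sm b m)" using MOD unfolding in_A_gr_def gr_module_def by blast
lemma sm_grade: "\<sigma> \<in> carrier G \<Longrightarrow> \<tau> \<in> carrier G \<Longrightarrow> a \<in> Ag \<sigma> \<Longrightarrow> m \<in> Mg \<tau> \<Longrightarrow> sm a m \<in> Mg (\<sigma> \<otimes>\<^bsub>G\<^esub> \<tau>)"
  using MOD unfolding in_A_gr_def gr_module_def by blast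
lemma unital: "unital_module M sm" using MOD unfolding in_A_gr_def by blast
lemma tf: "m \<in> M \<Longrightarrow> (\<And>a. sm a m = 0) \<Longrightarrow> m = 0" using MOD unfolding in_A_gr_def torsion_free_def by blast
lemma Mg_sub: "\<sigma> \<in> carrier G \<Longrightarrow> Mg \<sigma> \<subseteq> M" using MgD unfolding graded_dsum_def by blast
lemma Mg_subgrp: "\<sigma> \<in> carrier G \<Longrightarrow> subgrp_add (Mg \<sigma>)" using MgD unfolding graded_dsum_def by blast

lemma M0: "0 \<in> M" using Msub subgrp_0 by blast

lemma sm_0r: "sm a 0 = 0"
  using sm_addr[OF M0 M0, of a] by simp

lemma sm_0l: "m \<in> M \<Longrightarrow> sm 0 m = 0"
  using sm_addl[of m 0 0] by simp

lemma sm_negr: "m \<in> M \<Longrightarrow> sm a (- m) = - sm a m"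
proof -
  assume m: "m \<in> M"
  have "sm a m + sm a (- m) = 0" using sm_addr[OF m subgrp_neg[OF Msub m], of a] by (simp add: sm_0r)
  from minus_unique[OF this] show ?thesis by simp
qed

lemma sm_negl: "m \<in> M \<Longrightarrow> sm (- a) m = - sm a m"
proof -
  assume m: "m \<in> M"
  have "sm a m + sm (- a) m = 0" using sm_addl[OF m, of a "-a"] sm_0l[OF m] by simp
  from minus_unique[OF this] show ?thesis by simp
qed

lemma sm_diffr: "m \<in> M \<Longrightarrow> n \<in> M \<Longrightarrow> sm a (m - n) = sm a m - sm a n"
proof -
  assume m: "m \<in> M" and n: "n \<in> M"
  have "sm a (m + - n) = sm a m + sm a (- n)" using sm_addr[OF m subgrp_neg[OF Msub n]] .
  also have "\<dots> = sm a m - sm a n" using sm_negr[OF n, of a] by simp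
  finally show ?thesis by simp
qed

lemma sm_sumr: "(\<And>i. i \<in> F \<Longrightarrow> x i \<in> M) \<Longrightarrow> sm a (sum x F) = sum (\<lambda>i. sm a (x i)) F"
proof (induction F rule: infinite_finite_induct)
  case (insert i F)
  then show ?case using sm_addr subgrp_sum[OF Msub, of F x] by auto
qed (auto simp: sm_0r)

lemma sm_suml: "m \<in> M \<Longrightarrow> sm (sum x F) m = sum (\<lambda>i. sm (x i) m) F"
  by (induction F rule: infinite_finite_induct) (auto simp: sm_0l sm_addl)

lemma sm_sum_listl: "m \<in> M \<Longrightarrow> sm (sum_list xs) m = sum_list (map (\<lambda>y. sm y m) xs)"
  by (induction xs) (auto simp: sm_0l sm_addl)

lemma sm_zero_all:
  assumes m: "m \<in> M" and z: "\<And>x a. sm (x * a) m = 0"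
  shows "m = 0"
proof (rule tf[OF m])
  fix y :: 'a
  obtain ps where ps: "y = sum_list (map (\<lambda>(a, b). a * b) ps)"
    using ID unfolding idempotent_ring_def by blast
  have "sm y m = sum_list (map (\<lambda>y. sm y m) (map (\<lambda>(a, b). a * b) ps))"
    using ps sm_sum_listl[OF m] by simp
  also have "\<dots> = 0" by (induction ps) (auto simp: z)
  finally show "sm y m = 0" .
qed

lemma chi_apply: "chi sm m a = sm a m" by (simp add: chi_def)

lemma chi_0: "chi sm 0 = 0" by (auto simp: chi_def sm_0r)

lemma chi_add: "m \<in> M \<Longrightarrow> n \<in> M \<Longrightarrow> chi sm (m + n) = chi sm m + chi sm n"
  by (auto simp: chi_def sm_addr)

lemma chi_neg: "m \<in> M \<Longrightarrow> chi sm (- m) = - chi sm m"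
  by (auto simp: chi_def sm_negr)

lemma chi_sm: "m \<in> M \<Longrightarrow> chi sm (sm a m) = hom_act a (chi sm m)"
  by (auto simp: chi_def hom_act_def sm_mult)

lemma chi_inj: "inj_on (chi sm) M"
proof (rule inj_onI)
  fix m n assume m: "m \<in> M" and n: "n \<in> M" and e: "chi sm m = chi sm n"
  have "m - n = 0"
  proof (rule tf)
    show "m - n \<in> M" using m n Msub subgrp_diff by blast
    fix a show "sm a (m - n) = 0" using e sm_diffr[OF m n, of a] by (metis chi_apply diff_self)
  qed
  then show "m = n" by simp
qed

lemma chi_eq0: "m \<in> M \<Longrightarrow> chi sm m = 0 \<longleftrightarrow> m = 0"
  using chi_inj M0 chi_0 by (metis inj_on_eq_iff)

lemma chi_sum: "(\<And>i. i \<in> F \<Longrightarrow> x i \<in> M) \<Longrightarrow> chi sm (sum x F) = sum (\<lambda>i. chi sm (x i)) F"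
proof (induction F rule: infinite_finite_induct)
  case (insert i F)
  then show ?case using chi_add subgrp_sum[OF Msub, of F x] by auto
qed (auto simp: chi_0)

lemma HOM_deg_subgrp:
  assumes s: "\<sigma> \<in> carrier G"
  shows "subgrp_add (HOM_deg G Ag M sm Mg \<sigma>)"
proof -
  have c: "\<And>\<tau>. \<tau> \<in> carrier G \<Longrightarrow> \<tau> \<otimes>\<^bsub>G\<^esub> \<sigma> \<in> carrier G" using grp s by (simp add: group.is_monoid monoid.m_closed)
  show ?thesis unfolding subgrp_add_def HOM_deg_def
  proof (intro conjI ballI)
    show "0 \<in> {f. (\<forall>x. f x \<in> M) \<and> (\<forall>x y. f (x + y) = f x + f y) \<and> (\<forall>a x. f (a * x) = sm a (f x)) \<and>
          (\<forall>\<tau>\<in>carrier G. f ` Ag \<tau> \<subseteq> Mg (\<tau> \<otimes>\<^bsub>G\<^esub> \<sigma>))}"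
      using M0 sm_0r c Mg_subgrp subgrp_0 by auto
  next
    fix f g assume f: "f \<in> {f. (\<forall>x. f x \<in> M) \<and> (\<forall>x y. f (x + y) = f x + f y) \<and> (\<forall>a x. f (a * x) = sm a (f x)) \<and>
          (\<forall>\<tau>\<in>carrier G. f ` Ag \<tau> \<subseteq> Mg (\<tau> \<otimes>\<^bsub>G\<^esub> \<sigma>))}"
      and g: "g \<in> {f. (\<forall>x. f x \<in> M) \<and> (\<forall>x y. f (x + y) = f x + f y) \<and> (\<forall>a x. f (a * x) = sm a (f x)) \<and>
          (\<forall>\<tau>\<in>carrier G. f ` Ag \<tau> \<subseteq> Mg (\<tau> \<otimes>\<^bsub>G\<^esub> \<sigma>))}"
    show "f + g \<in> {f. (\<forall>x. f x \<in> M) \<and> (\<forall>x y. f (x + y) = f x + f y) \<and> (\<forall>a x. f (a * x) = sm a (f x)) \<and>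
          (\<forall>\<tau>\<in>carrier G. f ` Ag \<tau> \<subseteq> Mg (\<tau> \<otimes>\<^bsub>G\<^esub> \<sigma>))}"
      using f g Msub c Mg_subgrp by (auto simp: sm_addr add_ac image_subset_iff intro!: subgrp_plus)
  next
    fix f assume f: "f \<in> {f. (\<forall>x. f x \<in> M) \<and> (\<forall>x y. f (x + y) = f x + f y) \<and> (\<forall>a x. f (a * x) = sm a (f x)) \<and>
          (\<forall>\<tau>\<in>carrier G. f ` Ag \<tau> \<subseteq> Mg (\<tau> \<otimes>\<^bsub>G\<^esub> \<sigma>))}"
    show "- f \<in> {f. (\<forall>x. f x \<in> M) \<and> (\<forall>x y. f (x + y) = f x + f y) \<and> (\<forall>a x. f (a * x) = sm a (f x)) \<and>
          (\<forall>\<tau>\<in>carrier G. f ` Ag \<tau> \<subseteq> Mg (\<tau> \<otimes>\<^bsub>G\<^esub> \<sigma>))}"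
      using f Msub c Mg_subgrp by (auto simp: sm_negr image_subset_iff intro!: subgrp_neg)
  qed
qed

lemma chi_homog:
  assumes s: "\<sigma> \<in> carrier G" and m: "m \<in> Mg \<sigma>"
  shows "chi sm m \<in> HOM_deg G Ag M sm Mg \<sigma>"
  using m Mg_sub[OF s] s
  by (auto simp: HOM_deg_def chi_def sm_closed sm_addl sm_mult sm_grade)

lemma HOM_lin:
  assumes f: "f \<in> HOM G Ag M sm Mg"
  shows "f x \<in> M" "f (x + y) = f x + f y" "f (a * x) = sm a (f x)"
proof -
  obtain c where c: "hdecomp G (HOM_deg G Ag M sm Mg) f c" using f unfolding HOM_def by blast
  define S where "S = {\<sigma>. c \<sigma> \<noteq> 0}"
  have S: "S \<subseteq> carrier G" "finite S" "f = sum c S" using c hdecomp_supp_carrier unfolding S_def hdecomp_def by blast+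
  have cs: "\<And>\<sigma>. \<sigma> \<in> S \<Longrightarrow> c \<sigma> \<in> HOM_deg G Ag M sm Mg \<sigma>" using c S unfolding hdecomp_def by blast
  have fa: "\<And>z. f z = sum (\<lambda>\<sigma>. c \<sigma> z) S" using S(3) by (simp add: sum_fun_apply)
  show "f x \<in> M" unfolding fa using cs by (intro subgrp_sum[OF Msub]) (auto simp: HOM_deg_def)
  show "f (x + y) = f x + f y" unfolding fa using cs by (auto simp: HOM_deg_def sum.distrib[symmetric] intro!: sum.cong)
  show "f (a * x) = sm a (f x)" unfolding fa using cs by (subst sm_sumr) (auto simp: HOM_deg_def intro!: sum.cong)
qed

end


lemma (in grm) l_inj: "\<tau> \<in> carrier G \<Longrightarrow> inj_on (\<lambda>\<rho>. \<tau> \<otimes>\<^bsub>G\<^esub> \<rho>) (carrier G)"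
proof (rule inj_onI)
  fix x y assume t: "\<tau> \<in> carrier G" and x: "x \<in> carrier G" and y: "y \<in> carrier G"
    and e: "\<tau> \<otimes>\<^bsub>G\<^esub> x = \<tau> \<otimes>\<^bsub>G\<^esub> y"
  have "\<tau> \<in> Units G" using t grp by (simp add: group.Units_eq)
  then show "x = y" using e x y grp monoid.Units_l_cancel[OF group.is_monoid[OF grp]] by blast
qed

lemma (in grm) mclosed: "\<sigma> \<in> carrier G \<Longrightarrow> \<tau> \<in> carrier G \<Longrightarrow> \<sigma> \<otimes>\<^bsub>G\<^esub> \<tau> \<in> carrier G"
  using grp by (simp add: group.is_monoid monoid.m_closed)

lemma add_hom_sum:
  fixes h :: "'x::comm_monoid_add \<Rightarrow> 'y::ab_group_add"
  assumes "\<And>x y. h (x + y) = h x + h y"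
  shows "h (sum x F) = sum (\<lambda>i. h (x i)) F"
proof -
  have h0: "h 0 = 0" using assms[of 0 0] by simp
  show ?thesis by (induction F rule: infinite_finite_induct) (auto simp: h0 assms)
qed

context grm
begin

lemma dec_in_M: "hdecomp G Mg m c \<Longrightarrow> c \<sigma> \<in> M"
  unfolding hdecomp_def using Mg_sub M0 by (cases "\<sigma> \<in> carrier G") auto

lemma chi_decomp_gen:
  assumes D: "\<And>\<sigma> n. \<sigma> \<in> carrier G \<Longrightarrow> n \<in> Mg \<sigma> \<Longrightarrow> chi sm n \<in> D \<sigma>"
    and m: "m \<in> M" and c: "hdecomp G Mg m c"
  shows "hdecomp G D (chi sm m) (\<lambda>\<sigma>. chi sm (c \<sigma>))"
proof -
  have cM: "\<And>\<sigma>. c \<sigma> \<in> M" using dec_in_M[OF c] .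
  have supp: "{\<sigma>. chi sm (c \<sigma>) \<noteq> 0} = {\<sigma>. c \<sigma> \<noteq> 0}" using chi_eq0[OF cM] by auto
  have "m = sum c {\<sigma>. c \<sigma> \<noteq> 0}" using c unfolding hdecomp_def by blast
  then have "chi sm m = sum (\<lambda>\<sigma>. chi sm (c \<sigma>)) {\<sigma>. c \<sigma> \<noteq> 0}" using chi_sum[of _ c] cM by metis
  then show ?thesis using c D chi_0 unfolding hdecomp_def supp by auto
qed

lemma chi_HOM: "m \<in> M \<Longrightarrow> chi sm m \<in> HOM G Ag M sm Mg"
  unfolding HOM_def using chi_decomp_gen[of "HOM_deg G Ag M sm Mg" m] chi_homog gd_exists[OF MgD] by blast

lemma sum_list_M: "(\<forall>(a, n)\<in>set ps. n \<in> M) \<Longrightarrow> sum_list (map (\<lambda>(a, n). sm a n) ps) \<in> M"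
  by (induction ps) (auto simp: M0 sm_closed subgrp_plus[OF Msub])

lemma chi_sum_list: "(\<forall>(a, n)\<in>set ps. n \<in> M) \<Longrightarrow>
   chi sm (sum_list (map (\<lambda>(a, n). sm a n) ps)) = sum_list (map (\<lambda>(a, n). hom_act a (chi sm n)) ps)"
proof (induction ps)
  case Nil then show ?case by (simp add: chi_0)
next
  case (Cons p ps)
  obtain a n where p: "p = (a, n)" by force
  have n: "n \<in> M" using Cons.prems p by auto
  have r: "\<forall>(a, n)\<in>set ps. n \<in> M" using Cons.prems by auto
  show ?case using chi_add[OF sm_closed[OF n] sum_list_M[OF r]] Cons.IH[OF r] chi_sm[OF n] p by simp
qed

lemma chi_AHOM: "m \<in> M \<Longrightarrow> chi sm m \<in> AHOM G Ag M sm Mg"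
proof -
  assume m: "m \<in> M"
  obtain ps where ps: "\<forall>(a, n)\<in>set ps. n \<in> M" "m = sum_list (map (\<lambda>(a, n). sm a n) ps)"
    using unital m unfolding unital_module_def by blast
  define qs where "qs = map (\<lambda>(a, n). (a, chi sm n)) ps"
  have "chi sm m = sum_list (map (\<lambda>(a, f). hom_act a f) qs)"
    using chi_sum_list[OF ps(1)] ps(2) unfolding qs_def by (simp add: case_prod_unfold comp_def)
  moreover have "\<forall>(a, f)\<in>set qs. f \<in> HOM G Ag M sm Mg" using ps(1) chi_HOM unfolding qs_def by auto
  ultimately show ?thesis unfolding AHOM_def by blast
qed

lemma hom_act_HOM: "g \<in> HOM G Ag M sm Mg \<Longrightarrow> hom_act a g = chi sm (g a)"
  by (auto simp: hom_act_def chi_def HOM_lin(3))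

lemma AHOM_chi: "f \<in> AHOM G Ag M sm Mg \<Longrightarrow> \<exists>m\<in>M. f = chi sm m"
proof -
  assume "f \<in> AHOM G Ag M sm Mg"
  then obtain ps where ps: "\<forall>(a, g)\<in>set ps. g \<in> HOM G Ag M sm Mg" "f = sum_list (map (\<lambda>(a, g). hom_act a g) ps)"
    unfolding AHOM_def by blast
  have "(\<forall>(a, g)\<in>set ps. g \<in> HOM G Ag M sm Mg) \<Longrightarrow> sum_list (map (\<lambda>(a, g). g a) ps) \<in> M
     \<and> sum_list (map (\<lambda>(a, g). hom_act a g) ps) = chi sm (sum_list (map (\<lambda>(a, g). g a) ps))"
  proof (induction ps)
    case Nil then show ?case by (simp add: chi_0 M0)
  next
    case (Cons p ps)
    obtain a g where p: "p = (a, g)" by force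
    have g: "g \<in> HOM G Ag M sm Mg" using Cons.prems p by auto
    have r: "\<forall>(a, g)\<in>set ps. g \<in> HOM G Ag M sm Mg" using Cons.prems by auto
    have ga: "g a \<in> M" using HOM_lin(1)[OF g] .
    show ?case using Cons.IH[OF r] p ga chi_add[OF ga] hom_act_HOM[OF g] subgrp_plus[OF Msub] by auto
  qed
  then show ?thesis using ps by blast
qed

lemma AHOM_eq: "AHOM G Ag M sm Mg = chi sm ` M"
  using AHOM_chi chi_AHOM by blast

lemma inv_chi: "m \<in> M \<Longrightarrow> the_inv_into M (chi sm) (chi sm m) = m"
  using the_inv_into_f_f[OF chi_inj] .

lemma INV:
  assumes s: "\<sigma> \<in> carrier G" and m: "m \<in> M" and h: "chi sm m \<in> HOM_deg G Ag M sm Mg \<sigma>"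
  shows "m \<in> Mg \<sigma>"
proof -
  obtain c where c: "hdecomp G Mg m c" using gd_exists[OF MgD m] by blast
  define F where "F = {\<rho>. c \<rho> \<noteq> 0}"
  have F: "finite F" "F \<subseteq> carrier G" using c hdecomp_supp_carrier unfolding F_def hdecomp_def by blast+
  have cM: "\<And>\<rho>. c \<rho> \<in> M" using dec_in_M[OF c] .
  have cg: "\<And>\<rho>. \<rho> \<in> carrier G \<Longrightarrow> c \<rho> \<in> Mg \<rho>" using c unfolding hdecomp_def by blast
  have key: "c \<rho> = 0" if r: "\<rho> \<in> carrier G" "\<rho> \<noteq> \<sigma>" for \<rho>
  proof (rule tf[OF cM])
    fix x :: 'a
    obtain e where e: "hdecomp G Ag x e" using gd_exists[OF AgD] by blast
    define E where "E = {\<tau>. e \<tau> \<noteq> 0}"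
    have E: "finite E" "E \<subseteq> carrier G" "x = sum e E" using e hdecomp_supp_carrier unfolding E_def hdecomp_def by blast+
    have z: "sm (e \<tau>) (c \<rho>) = 0" if t: "\<tau> \<in> carrier G" for \<tau>
    proof -
      define y where "y = e \<tau>"
      have y: "y \<in> Ag \<tau>" using e t unfolding hdecomp_def y_def by blast
      define K where "K = insert \<sigma> F"
      have K: "finite K" "K \<subseteq> carrier G" "\<sigma> \<in> K" using F s unfolding K_def by auto
      define d where "d = (\<lambda>\<rho>'. sm y (c \<rho>') - (if \<rho>' = \<sigma> then sm y m else 0))"
      have mK: "m = sum c K" by (rule hdecomp_sum[OF c K(1)]) (auto simp: K_def F_def)
      have "sum d K = sum (\<lambda>\<rho>'. sm y (c \<rho>')) K - sum (\<lambda>\<rho>'. if \<rho>' = \<sigma> then sm y m else 0) K"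
        unfolding d_def by (rule sum_subtractf)
      also have "\<dots> = sm y (sum c K) - sm y m" using sm_sumr[of K c y] cM K by simp
      finally have sd: "sum d K = 0" using mK by simp
      have ymg: "sm y m \<in> Mg (\<tau> \<otimes>\<^bsub>G\<^esub> \<sigma>)" using h t y unfolding HOM_deg_def chi_def by blast
      have dK: "d \<rho>' \<in> Mg (\<tau> \<otimes>\<^bsub>G\<^esub> \<rho>')" if "\<rho>' \<in> K" for \<rho>'
      proof -
        have rc: "\<rho>' \<in> carrier G" using that K by blast
        have sg: "subgrp_add (Mg (\<tau> \<otimes>\<^bsub>G\<^esub> \<rho>'))" using Mg_subgrp mclosed[OF t rc] .
        have a1: "sm y (c \<rho>') \<in> Mg (\<tau> \<otimes>\<^bsub>G\<^esub> \<rho>')" using sm_grade[OF t rc y cg[OF rc]] .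
        have a2: "(if \<rho>' = \<sigma> then sm y m else 0) \<in> Mg (\<tau> \<otimes>\<^bsub>G\<^esub> \<rho>')" using ymg subgrp_0[OF sg] by auto
        show ?thesis unfolding d_def using subgrp_diff[OF sg a1 a2] .
      qed
      have inj: "inj_on (\<lambda>\<rho>. \<tau> \<otimes>\<^bsub>G\<^esub> \<rho>) K" using inj_on_subset[OF l_inj[OF t] K(2)] .
      have all0: "\<forall>\<rho>'\<in>K. d \<rho>' = 0"
        by (rule gd_indep_inj[OF MgD K(1) inj _ dK sd]) (use K(2) mclosed[OF t] in auto)
      show ?thesis
      proof (cases "\<rho> \<in> F")
        case True
        then have "d \<rho> = 0" using all0 K_def by blast
        then show ?thesis using r(2) unfolding d_def y_def by simp
      next
        case False
        then show ?thesis unfolding F_def by (simp add: sm_0r)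
      qed
    qed
    have "sm x (c \<rho>) = sum (\<lambda>\<tau>. sm (e \<tau>) (c \<rho>)) E" using E(3) sm_suml[OF cM] by metis
    also have "\<dots> = 0" using z E(2) by (auto intro!: sum.neutral)
    finally show "sm x (c \<rho>) = 0" .
  qed
  have "m = sum c {\<sigma>}" by (rule hdecomp_sum[OF c]) (use key F F_def in auto)
  then show ?thesis using cg[OF s] by simp
qed

lemma HOM_indep:
  assumes F: "finite F" "F \<subseteq> carrier G" and f: "\<And>\<rho>. \<rho> \<in> F \<Longrightarrow> f \<rho> \<in> HOM_deg G Ag M sm Mg \<rho>"
    and s: "sum f F = 0"
  shows "\<forall>\<rho>\<in>F. f \<rho> = 0"
proof
  fix \<rho> assume r: "\<rho> \<in> F"
  show "f \<rho> = 0"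
  proof
    fix x :: 'a
    obtain e where e: "hdecomp G Ag x e" using gd_exists[OF AgD] by blast
    define E where "E = {\<tau>. e \<tau> \<noteq> 0}"
    have E: "finite E" "E \<subseteq> carrier G" "x = sum e E" using e hdecomp_supp_carrier unfolding E_def hdecomp_def by blast+
    have add: "\<And>a b. f \<rho> (a + b) = f \<rho> a + f \<rho> b" using f[OF r] unfolding HOM_deg_def by blast
    have z: "f \<rho> (e \<tau>) = 0" if t: "\<tau> \<in> carrier G" for \<tau>
    proof -
      have y: "e \<tau> \<in> Ag \<tau>" using e t unfolding hdecomp_def by blast
      have inj: "inj_on (\<lambda>\<rho>. \<tau> \<otimes>\<^bsub>G\<^esub> \<rho>) F" using inj_on_subset[OF l_inj[OF t] F(2)] .
      have sd: "sum (\<lambda>\<rho>'. f \<rho>' (e \<tau>)) F = 0" using s sum_fun_apply[of f F "e \<tau>"] by simp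
      have dF: "f \<rho>' (e \<tau>) \<in> Mg (\<tau> \<otimes>\<^bsub>G\<^esub> \<rho>')" if "\<rho>' \<in> F" for \<rho>'
        using f[OF that] t y unfolding HOM_deg_def by blast
      have "\<forall>\<rho>'\<in>F. f \<rho>' (e \<tau>) = 0"
        by (rule gd_indep_inj[OF MgD F(1) inj _ dF sd]) (use F(2) mclosed[OF t] in auto)
      then show ?thesis using r by blast
    qed
    have "f \<rho> x = sum (\<lambda>\<tau>. f \<rho> (e \<tau>)) E" using E(3) add_hom_sum[of "f \<rho>", OF add] by metis
    also have "\<dots> = 0" using z E(2) by (auto intro!: sum.neutral)
    finally show "f \<rho> x = 0 x" by simp
  qed
qed

end

context grm
begin

lemma AHOM_subgrp: "subgrp_add (AHOM G Ag M sm Mg)"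
  unfolding AHOM_eq subgrp_add_def
proof (intro conjI ballI)
  show "0 \<in> chi sm ` M" using M0 chi_0 by (metis image_eqI)
next
  fix x y assume "x \<in> chi sm ` M" "y \<in> chi sm ` M"
  then obtain m n where "m \<in> M" "n \<in> M" "x = chi sm m" "y = chi sm n" by blast
  then show "x + y \<in> chi sm ` M" using chi_add subgrp_plus[OF Msub] by (metis image_eqI)
next
  fix x assume "x \<in> chi sm ` M"
  then obtain m where "m \<in> M" "x = chi sm m" by blast
  then show "- x \<in> chi sm ` M" using chi_neg subgrp_neg[OF Msub] by (metis image_eqI)
qed

lemma AHOM_deg_subgrp: "\<sigma> \<in> carrier G \<Longrightarrow> subgrp_add (AHOM_deg G Ag M sm Mg \<sigma>)"
  using AHOM_subgrp HOM_deg_subgrp unfolding AHOM_deg_def subgrp_add_def by blast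

lemma AHOM_dsum: "graded_dsum G (AHOM_deg G Ag M sm Mg) (AHOM G Ag M sm Mg)"
  unfolding graded_dsum_def
proof (intro conjI ballI)
  show "subgrp_add (AHOM G Ag M sm Mg)" by (rule AHOM_subgrp)
  fix \<sigma> assume "\<sigma> \<in> carrier G"
  then show "subgrp_add (AHOM_deg G Ag M sm Mg \<sigma>)" "AHOM_deg G Ag M sm Mg \<sigma> \<subseteq> AHOM G Ag M sm Mg"
    using AHOM_deg_subgrp unfolding AHOM_deg_def by auto
next
  fix f assume f: "f \<in> AHOM G Ag M sm Mg"
  then obtain m where m: "m \<in> M" "f = chi sm m" using AHOM_chi by blast
  obtain c where c: "hdecomp G Mg m c" using gd_exists[OF MgD m(1)] by blast
  have ex: "hdecomp G (AHOM_deg G Ag M sm Mg) f (\<lambda>\<sigma>. chi sm (c \<sigma>))"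
    unfolding m(2)
    by (rule chi_decomp_gen[OF _ m(1) c]) (use chi_AHOM chi_homog Mg_sub in \<open>auto simp: AHOM_deg_def subset_iff\<close>)
  have un: "c1 = c2" if c1: "hdecomp G (AHOM_deg G Ag M sm Mg) f c1" and c2: "hdecomp G (AHOM_deg G Ag M sm Mg) f c2" for c1 c2
  proof
    fix \<sigma>
    define K where "K = {\<sigma>. c1 \<sigma> \<noteq> 0} \<union> {\<sigma>. c2 \<sigma> \<noteq> 0}"
    have K: "finite K" "K \<subseteq> carrier G" using c1 c2 hdecomp_supp_carrier unfolding K_def hdecomp_def by blast+
    have "f = sum c1 K" by (rule hdecomp_sum[OF c1 K(1)]) (auto simp: K_def)
    moreover have "f = sum c2 K" by (rule hdecomp_sum[OF c2 K(1)]) (auto simp: K_def)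
    ultimately have s: "sum (\<lambda>\<rho>. c1 \<rho> - c2 \<rho>) K = 0" by (simp add: sum_subtractf)
    have d: "c1 \<rho> - c2 \<rho> \<in> HOM_deg G Ag M sm Mg \<rho>" if "\<rho> \<in> K" for \<rho>
    proof -
      have rc: "\<rho> \<in> carrier G" using that K by blast
      have "c1 \<rho> \<in> HOM_deg G Ag M sm Mg \<rho>" "c2 \<rho> \<in> HOM_deg G Ag M sm Mg \<rho>"
        using c1 c2 rc unfolding hdecomp_def AHOM_deg_def by blast+
      then show ?thesis using subgrp_diff[OF HOM_deg_subgrp[OF rc]] by blast
    qed
    have all0: "\<forall>\<rho>\<in>K. c1 \<rho> - c2 \<rho> = 0" by (rule HOM_indep[OF K _ s]) (use d in auto)
    show "c1 \<sigma> = c2 \<sigma>"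
    proof (cases "\<sigma> \<in> K")
      case True
      then have "c1 \<sigma> - c2 \<sigma> = 0" using all0 by blast
      then show ?thesis by simp
    next
      case False
      then show ?thesis unfolding K_def by simp
    qed
  qed
  show "\<exists>!c. hdecomp G (AHOM_deg G Ag M sm Mg) f c" using ex un by blast
qed

lemma AHOM_in_A_gr: "in_A_gr G Ag (AHOM G Ag M sm Mg) hom_act (AHOM_deg G Ag M sm Mg)"
  unfolding in_A_gr_def
proof (intro conjI)
  show "gr_module G Ag (AHOM G Ag M sm Mg) hom_act (AHOM_deg G Ag M sm Mg)"
    unfolding gr_module_def
  proof (intro conjI allI ballI)
    show "subgrp_add (AHOM G Ag M sm Mg)" by (rule AHOM_subgrp)
    show "graded_dsum G (AHOM_deg G Ag M sm Mg) (AHOM G Ag M sm Mg)" by (rule AHOM_dsum)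
  next
    fix a f assume "f \<in> AHOM G Ag M sm Mg"
    then obtain m where m: "m \<in> M" "f = chi sm m" using AHOM_chi by blast
    show "hom_act a f \<in> AHOM G Ag M sm Mg" using m chi_sm chi_AHOM sm_closed by metis
  next
    fix a b f assume "f \<in> AHOM G Ag M sm Mg"
    then obtain m where m: "m \<in> M" "f = chi sm m" using AHOM_chi by blast
    show "hom_act (a + b) f = hom_act a f + hom_act b f"
      using m by (auto simp: hom_act_def chi_def distrib_left sm_addl)
  next
    fix a f g
    show "hom_act a (f + g) = hom_act a f + hom_act a g" by (auto simp: hom_act_def)
  next
    fix a b f
    show "hom_act (a * b) f = hom_act a (hom_act b f)" by (auto simp: hom_act_def mult.assoc)
  next
    fix \<sigma> \<tau> a f assume s: "\<sigma> \<in> carrier G" and t: "\<tau> \<in> carrier G" and a: "a \<in> Ag \<sigma>"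
      and f: "f \<in> AHOM_deg G Ag M sm Mg \<tau>"
    obtain m where m: "m \<in> M" "f = chi sm m" using AHOM_chi f unfolding AHOM_deg_def by blast
    have mg: "m \<in> Mg \<tau>" using INV[OF t m(1)] f m(2) unfolding AHOM_deg_def by blast
    have am: "sm a m \<in> Mg (\<sigma> \<otimes>\<^bsub>G\<^esub> \<tau>)" using sm_grade[OF s t a mg] .
    have st: "\<sigma> \<otimes>\<^bsub>G\<^esub> \<tau> \<in> carrier G" using mclosed[OF s t] .
    show "hom_act a f \<in> AHOM_deg G Ag M sm Mg (\<sigma> \<otimes>\<^bsub>G\<^esub> \<tau>)"
      unfolding AHOM_deg_def m(2) chi_sm[OF m(1), symmetric]
      using chi_AHOM[OF sm_closed[OF m(1)]] chi_homog[OF st am] by blast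
  qed
next
  show "unital_module (AHOM G Ag M sm Mg) hom_act"
    unfolding unital_module_def
  proof
    fix f assume "f \<in> AHOM G Ag M sm Mg"
    then obtain m where m: "m \<in> M" "f = chi sm m" using AHOM_chi by blast
    obtain ps where ps: "\<forall>(a, n)\<in>set ps. n \<in> M" "m = sum_list (map (\<lambda>(a, n). sm a n) ps)"
      using unital m unfolding unital_module_def by blast
    define qs where "qs = map (\<lambda>(a, n). (a, chi sm n)) ps"
    have "f = sum_list (map (\<lambda>(a, f). hom_act a f) qs)"
      using chi_sum_list[OF ps(1)] ps(2) m(2) unfolding qs_def by (simp add: case_prod_unfold comp_def)
    moreover have "\<forall>(a, f)\<in>set qs. f \<in> AHOM G Ag M sm Mg" using ps(1) chi_AHOM unfolding qs_def by auto
    ultimately show "\<exists>ps. (\<forall>(a, n)\<in>set ps. n \<in> AHOM G Ag M sm Mg) \<and> f = sum_list (map (\<lambda>(a, n). hom_act a n) ps)"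
      by blast
  qed
next
  show "torsion_free (AHOM G Ag M sm Mg) hom_act"
    unfolding torsion_free_def
  proof (intro ballI impI)
    fix f assume "f \<in> AHOM G Ag M sm Mg" and z: "\<forall>a. hom_act a f = 0"
    then obtain m where m: "m \<in> M" "f = chi sm m" using AHOM_chi by blast
    have "m = 0"
    proof (rule tf[OF m(1)])
      fix a
      have "chi sm (sm a m) = 0" using z m chi_sm by metis
      then show "sm a m = 0" using chi_eq0 sm_closed[OF m(1)] by blast
    qed
    then show "f = 0" using m chi_0 by simp
  qed
qed

end

theorem proposition3p2:
  fixes G :: "('g, 'b) monoid_scheme"
    and Ag :: "'g \<Rightarrow> 'a::ring set"
    and M :: "'m::ab_group_add set" and sm :: "'a \<Rightarrow> 'm \<Rightarrow> 'm" and Mg :: "'g \<Rightarrow> 'm set"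
    and N :: "'n::ab_group_add set" and sn :: "'a \<Rightarrow> 'n \<Rightarrow> 'n" and Ng :: "'g \<Rightarrow> 'n set"
  assumes "graded_ring G Ag"
    and "idempotent_ring TYPE('a)"
    and "in_A_gr G Ag M sm Mg"
    and "in_A_gr G Ag N sn Ng"
  shows "in_A_gr G Ag (AHOM G Ag M sm Mg) hom_act (AHOM_deg G Ag M sm Mg)
       \<and> bij_betw (chi sm) M (AHOM G Ag M sm Mg)
       \<and> gr_hom G M sm Mg (AHOM G Ag M sm Mg) hom_act (AHOM_deg G Ag M sm Mg) (chi sm)
       \<and> gr_hom G (AHOM G Ag M sm Mg) hom_act (AHOM_deg G Ag M sm Mg) M sm Mg
           (the_inv_into M (chi sm))
       \<and> (\<forall>f. gr_hom G M sm Mg N sn Ng f \<longrightarrow>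
            (\<forall>h\<in>AHOM G Ag M sm Mg. f \<circ> h \<in> AHOM G Ag N sn Ng)
            \<and> (\<forall>m\<in>M. f \<circ> chi sm m = chi sn (f m)))"
proof -
  interpret A: grm G Ag M sm Mg using assms by (simp add: grm_def)
  interpret B: grm G Ag N sn Ng using assms by (simp add: grm_def)
  have nat: "f \<circ> chi sm m = chi sn (f m)" if f: "gr_hom G M sm Mg N sn Ng f" and m: "m \<in> M" for f m
    using f m A.sm_closed unfolding gr_hom_def by (auto simp: chi_def)
  have P1: "bij_betw (chi sm) M (AHOM G Ag M sm Mg)"
    unfolding bij_betw_def using A.chi_inj A.AHOM_eq by simp
  have P2: "gr_hom G M sm Mg (AHOM G Ag M sm Mg) hom_act (AHOM_deg G Ag M sm Mg) (chi sm)"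
    unfolding gr_hom_def
  proof (intro conjI ballI allI)
    fix m assume "m \<in> M" then show "chi sm m \<in> AHOM G Ag M sm Mg" by (rule A.chi_AHOM)
  next
    fix m m' assume "m \<in> M" "m' \<in> M" then show "chi sm (m + m') = chi sm m + chi sm m'" by (rule A.chi_add)
  next
    fix a m assume "m \<in> M" then show "chi sm (sm a m) = hom_act a (chi sm m)" by (rule A.chi_sm)
  next
    fix \<sigma> assume s: "\<sigma> \<in> carrier G"
    show "chi sm ` Mg \<sigma> \<subseteq> AHOM_deg G Ag M sm Mg \<sigma>"
      using A.chi_AHOM A.chi_homog[OF s] A.Mg_sub[OF s] unfolding AHOM_deg_def by blast
  qed
  have P3: "gr_hom G (AHOM G Ag M sm Mg) hom_act (AHOM_deg G Ag M sm Mg) M sm Mg (the_inv_into M (chi sm))"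
    unfolding gr_hom_def
  proof (intro conjI ballI allI)
    fix f assume "f \<in> AHOM G Ag M sm Mg"
    then obtain m where m: "m \<in> M" "f = chi sm m" using A.AHOM_chi by blast
    show "the_inv_into M (chi sm) f \<in> M" using m A.inv_chi by simp
    fix a
    show "the_inv_into M (chi sm) (hom_act a f) = sm a (the_inv_into M (chi sm) f)"
      using m A.inv_chi A.chi_sm A.sm_closed by metis
  next
    fix f g assume "f \<in> AHOM G Ag M sm Mg" "g \<in> AHOM G Ag M sm Mg"
    then obtain m n where m: "m \<in> M" "f = chi sm m" "n \<in> M" "g = chi sm n" using A.AHOM_chi by metis
    show "the_inv_into M (chi sm) (f + g) = the_inv_into M (chi sm) f + the_inv_into M (chi sm) g"
      using m A.inv_chi A.chi_add subgrp_plus[OF A.Msub] by metis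
  next
    fix \<sigma> assume s: "\<sigma> \<in> carrier G"
    show "the_inv_into M (chi sm) ` AHOM_deg G Ag M sm Mg \<sigma> \<subseteq> Mg \<sigma>"
    proof
      fix x assume "x \<in> the_inv_into M (chi sm) ` AHOM_deg G Ag M sm Mg \<sigma>"
      then obtain f where f: "f \<in> AHOM_deg G Ag M sm Mg \<sigma>" "x = the_inv_into M (chi sm) f" by blast
      then obtain m where m: "m \<in> M" "f = chi sm m" using A.AHOM_chi unfolding AHOM_deg_def by blast
      show "x \<in> Mg \<sigma>" using A.INV[OF s m(1)] f m A.inv_chi unfolding AHOM_deg_def by auto
    qed
  qed
  have P4: "\<forall>f. gr_hom G M sm Mg N sn Ng f \<longrightarrow>
            (\<forall>h\<in>AHOM G Ag M sm Mg. f \<circ> h \<in> AHOM G Ag N sn Ng)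
            \<and> (\<forall>m\<in>M. f \<circ> chi sm m = chi sn (f m))"
  proof (intro allI impI conjI ballI)
    fix f h assume f: "gr_hom G M sm Mg N sn Ng f" and "h \<in> AHOM G Ag M sm Mg"
    then obtain m where m: "m \<in> M" "h = chi sm m" using A.AHOM_chi by blast
    have "f m \<in> N" using f m unfolding gr_hom_def by blast
    then show "f \<circ> h \<in> AHOM G Ag N sn Ng" using nat[OF f m(1)] m(2) B.chi_AHOM by simp
  next
    fix f m assume "gr_hom G M sm Mg N sn Ng f" "m \<in> M"
    then show "f \<circ> chi sm m = chi sn (f m)" by (rule nat)
  qed
  show ?thesis using A.AHOM_in_A_gr P1 P2 P3 P4 by blast
qed

end
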